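(* Let $a,b\in\mathbb{R}$ with $|a|<1$, $b\ne0$, $\mu=1-a^2$, and let $M\in\mathbb{R}$ with $|M|\le1$. Let $1\le p,q\le\infty$ with $\frac1p+\frac1q=1$. Let $\lambda(x,\tau)$ be a sufficiently regular function decaying at spatial infinity. Then, for $t>\tau\ge0$, $$\|U[\partial_x\lambda(\tau)](\cdot,t,\tau)\|_{L^\infty}\le C\sum_{n=0}^{1}(1+t)^{-\frac12+\frac n2}(t-\tau)^{-\frac12+\frac1{2p}-\frac n2}\|\lambda(\cdot,\tau)\|_{L^q},$$ with $C$ independent of $t,\tau$.
   Context: $\chi_*(x)\equiv\frac{\sqrt{\mu}}{b}\frac{(e^{\frac{bM}{2\mu}}-1)e^{-\frac{x^2}{4\mu}}}{\sqrt\pi+(e^{\frac{bM}{2\mu}}-1)\int_{x/\sqrt{4\mu}}^\infty e^{-y^2}dy}$, $\chi(x,t)\equiv(1+t)^{-1/2}\chi_*\big(\frac{x-a(1+t)}{\sqrt{1+t}}\big)$, $\eta(x,t)\equiv\exp\big(\frac{b}{2\mu}\int_{-\infty}^x\chi(y,t)dy\big)$, $G_0(x,t)\equiv\frac{1}{\sqrt{4\pi\mu t}}e^{-\frac{(x-at)^2}{4\mu t}}$. For a function $h$ of $x$, $$U[h](x,t,\tau)\equiv\int_{\mathbb{R}}\partial_x\big(G_0(x-y,t-\tau)\eta(x,t)\big)\eta(y,\tau)^{-1}\Big(\int_{-\infty}^yh(\xi)d\xi\Big)dy,\quad x\in\mathbb{R},\ 0\le\tau<t,$$ and $U[\partial_x\lambda(\tau)]$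 means $U[h]$ with $h=\partial_x\lambda(\cdot,\tau)$. *)

theory Defs
  imports "HOL-Analysis.Analysis" "HOL-Probability.Essential_Supremum"
begin

definition chi_star :: "real \<Rightarrow> real \<Rightarrow> real \<Rightarrow> real \<Rightarrow> real" where
  "chi_star b mu M x =
     sqrt mu / b * ((exp (b * M / (2 * mu)) - 1) * exp (- (x\<^sup>2) / (4 * mu)))
     / (sqrt pi + (exp (b * M / (2 * mu)) - 1) * integral {x / sqrt (4 * mu)..} (\<lambda>y. exp (- (y\<^sup>2))))"

definition chi :: "real \<Rightarrow> real \<Rightarrow> real \<Rightarrow> real \<Rightarrow> real \<Rightarrow> real \<Rightarrow> real" where
  "chi a b mu M x t = (1 + t) powr (-1/2) * chi_star b mu M ((x - a * (1 + t)) / sqrt (1 + t))"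

definition eta :: "real \<Rightarrow> real \<Rightarrow> real \<Rightarrow> real \<Rightarrow> real \<Rightarrow> real \<Rightarrow> real" where
  "eta a b mu M x t = exp (b / (2 * mu) * integral {..x} (\<lambda>y. chi a b mu M y t))"

definition G0 :: "real \<Rightarrow> real \<Rightarrow> real \<Rightarrow> real \<Rightarrow> real" where
  "G0 a mu x t = 1 / sqrt (4 * pi * mu * t) * exp (- ((x - a * t)\<^sup>2) / (4 * mu * t))"

definition U_op :: "real \<Rightarrow> real \<Rightarrow> real \<Rightarrow> real \<Rightarrow> (real \<Rightarrow> real) \<Rightarrow> real \<Rightarrow> real \<Rightarrow> real \<Rightarrow> real" where
  "U_op a b mu M h x t \<tau> =
     (\<integral>y. deriv (\<lambda>x'. G0 a mu (x' - y) (t - \<tau>) * eta a b mu M x' t) x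
            * inverse (eta a b mu M y \<tau>) * integral {..y} h \<partial>lborel)"

definition memLq :: "ereal \<Rightarrow> (real \<Rightarrow> real) \<Rightarrow> bool" where
  "memLq q f \<longleftrightarrow> f \<in> borel_measurable lborel \<and>
     (if q = \<infinity> then esssup lborel (\<lambda>x. ereal \<bar>f x\<bar>) < \<infinity>
      else integrable lborel (\<lambda>x. \<bar>f x\<bar> powr real_of_ereal q))"

definition Lq_norm :: "ereal \<Rightarrow> (real \<Rightarrow> real) \<Rightarrow> real" where
  "Lq_norm q f = (if q = \<infinity> then real_of_ereal (esssup lborel (\<lambda>x. ereal \<bar>f x\<bar>))
     else (\<integral>x. \<bar>f x\<bar> powr real_of_ereal q \<partial>lborel) powr (1 / real_of_ereal q))"

end

theory Submission
  imports Defs "HOL-Probability.Distributions"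
begin

lemma improper_ftc:
  fixes f f' :: "real \<Rightarrow> real"
  assumes der: "\<And>w. w \<le> x \<Longrightarrow> (f has_real_derivative f' w) (at w)"
    and lim: "(f \<longlongrightarrow> L) at_bot"
  shows "(f' has_integral (f x - L)) {..x}"
proof -
  have ftc: "(f' has_integral (f c - f a)) {a..c}" if "a \<le> c" "c \<le> x" for a c
    using that by (intro fundamental_theorem_of_calculus)
      (auto intro!: has_real_derivative_iff_has_vector_derivative[THEN iffD1, THEN has_vector_derivative_at_within] der)
  have restr: "((\<lambda>w. if w \<in> {..x} then f' w else 0) has_integral
      (if a \<le> min b x then f (min b x) - f a else 0)) (cbox a b)" for a b :: real
  proof -
    have eq: "{..x} \<inter> cbox a b = {a..min b x}" by auto
    show ?thesis
    proof (cases "a \<le> min b x")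
      case True then show ?thesis
        unfolding has_integral_restrict_Int eq using ftc[of a "min b x"] by simp
    next
      case False then have e: "{a..min b x} = {}" by auto
      have "(f' has_integral 0) {a..min b x}" unfolding e by simp
      then show ?thesis unfolding has_integral_restrict_Int eq if_not_P[OF False] .
    qed
  qed
  show ?thesis
  proof (subst has_integral_alt', intro conjI allI impI)
    fix a b :: real
    show "(\<lambda>w. if w \<in> {..x} then f' w else 0) integrable_on cbox a b"
      using restr by blast
  next
    fix e :: real assume e: "e > 0"
    from lim e have "eventually (\<lambda>a. dist (f a) L < e) at_bot" by (rule tendstoD)
    then obtain Z where Z: "\<And>a. a \<le> Z \<Longrightarrow> dist (f a) L < e"
      unfolding eventually_at_bot_linorder by blast
    define B where "B = max (\<bar>x\<bar>+1) (\<bar>Z\<bar>+1)"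
    have B: "B > 0" "B > \<bar>x\<bar>" "B > \<bar>Z\<bar>" unfolding B_def by auto
    show "\<exists>B>0. \<forall>a b. ball 0 B \<subseteq> cbox a b \<longrightarrow>
      norm (integral (cbox a b) (\<lambda>w. if w \<in> {..x} then f' w else 0) - (f x - L)) < e"
    proof (intro exI[of _ B] conjI allI impI)
      show "0 < B" by (rule B(1))
    next
      fix a b :: real assume sub: "ball 0 B \<subseteq> cbox a b"
      have "0 \<in> ball (0::real) B" using B by simp
      then have "0 \<in> cbox a b" using sub by blast
      then have a0: "a \<le> 0" and b0: "0 \<le> b" by auto
      have "a \<le> -B"
      proof (rule ccontr)
        assume "\<not> a \<le> -B"
        then have "(a - B)/2 \<in> ball 0 B" using a0 B by (auto simp: dist_real_def)
        then have "(a - B)/2 \<in> cbox a b" using sub by blast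
        then show False using \<open>\<not> a \<le> -B\<close> B by auto
      qed
      have "b \<ge> B"
      proof (rule ccontr)
        assume "\<not> b \<ge> B"
        then have "(b + B)/2 \<in> ball 0 B" using b0 B by (auto simp: dist_real_def)
        then have "(b + B)/2 \<in> cbox a b" using sub by blast
        then show False using \<open>\<not> b \<ge> B\<close> B by auto
      qed
      have mm: "min b x = x" "a \<le> x" using \<open>b \<ge> B\<close> \<open>a \<le> -B\<close> B by auto
      have "integral (cbox a b) (\<lambda>w. if w \<in> {..x} then f' w else 0) = f x - f a"
        using restr[of a b] mm by (simp add: integral_unique)
      moreover have "dist (f a) L < e" using Z \<open>a \<le> -B\<close> B by auto
      ultimately show "norm (integral (cbox a b) (\<lambda>w. if w \<in> {..x} then f' w else 0) - (f x - L)) < e"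
        by (simp add: dist_real_def abs_minus_commute)
    qed
  qed
qed

definition gs :: "real \<Rightarrow> real" where "gs y = exp (- (y\<^sup>2))"
definition Phi :: "real \<Rightarrow> real" where "Phi z = integral {z..} gs"

lemma gs_eq: "gs y = sqrt pi * normal_density 0 (1 / sqrt 2) y"
  by (simp add: gs_def normal_density_def power_divide real_sqrt_mult)

lemma gs_integrable: "integrable lborel gs"
  unfolding gs_eq by simp

lemma gs_integral: "(\<integral>y. gs y \<partial>lborel) = sqrt pi"
  unfolding gs_eq by simp

lemma gs_pos: "0 < gs y" and gs_le1: "gs y \<le> 1"
  by (auto simp: gs_def)

lemma gs_cont: "continuous_on S gs"
  unfolding gs_def by (intro continuous_intros)

lemma gs_meas[measurable]: "gs \<in> borel_measurable borel"
  unfolding gs_def by measurable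

lemma gs_set_integrable: "A \<in> sets lborel \<Longrightarrow> set_integrable lborel A gs"
  unfolding set_integrable_def using gs_integrable by (intro integrable_mult_indicator) auto

lemma Phi_LINT: "Phi z = (LINT y:{z..}|lborel. gs y)"
  unfolding Phi_def by (rule set_borel_integral_eq_integral(2)[symmetric]) (simp add: gs_set_integrable)

lemma gs_integrable_on: "gs integrable_on {z..}"
  by (rule set_borel_integral_eq_integral(1)) (simp add: gs_set_integrable)

lemma Phi_nonneg: "0 \<le> Phi z"
  unfolding Phi_LINT set_lebesgue_integral_def
  by (intro integral_nonneg_AE) (auto simp: gs_pos less_imp_le)

lemma Phi_le: "Phi z \<le> sqrt pi"
proof -
  have "Phi z \<le> (\<integral>y. gs y \<partial>lborel)"
    unfolding Phi_LINT set_lebesgue_integral_def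
    by (intro integral_mono gs_integrable integrable_mult_indicator)
       (auto simp: indicator_def gs_pos less_imp_le gs_integrable)
  then show ?thesis using gs_integral by simp
qed

lemma Phi_split: assumes "z0 \<le> w" shows "Phi w = Phi z0 - integral {z0..w} gs"
proof -
  have i1: "(gs has_integral integral {z0..w} gs) {z0..w}"
    by (intro integrable_integral integrable_continuous_interval gs_cont)
  have i2: "(gs has_integral Phi w) {w..}"
    unfolding Phi_def using gs_integrable_on by (rule integrable_integral)
  have neg: "negligible ({z0..w} \<inter> {w..})"
  proof -
    have "{z0..w} \<inter> {w..} = {w}" using assms by auto
    then show ?thesis by simp
  qed
  have "(gs has_integral (integral {z0..w} gs + Phi w)) ({z0..w} \<union> {w..})"
    by (rule has_integral_Un[OF i1 i2 neg])
  moreover have "{z0..w} \<union> {w..} = {z0..}" using assms by auto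
  ultimately have "(gs has_integral (integral {z0..w} gs + Phi w)) {z0..}" by simp
  then have "Phi z0 = integral {z0..w} gs + Phi w"
    unfolding Phi_def by (rule integral_unique)
  then show ?thesis by simp
qed

lemma Phi_deriv: "(Phi has_real_derivative (- gs z)) (at z)"
proof -
  have "((\<lambda>w. Phi (z-1) - integral {z-1..w} gs) has_real_derivative (- gs z)) (at z within {z-1..z+1})"
    using integral_has_real_derivative[OF gs_cont, of z "z-1" "z+1"]
    by (auto intro!: derivative_eq_intros)
  then have "((\<lambda>w. Phi (z-1) - integral {z-1..w} gs) has_real_derivative (- gs z)) (at z)"
    by (simp add: at_within_Icc_at)
  then show ?thesis
    by (rule has_field_derivative_transform_within_open[where S="{z-1<..}"])
       (auto, metis Phi_split less_imp_le)
qed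

lemma Phi_lim: "(Phi \<longlongrightarrow> sqrt pi) at_bot"
proof -
  have L: "((\<lambda>a. LINT y:{a..0}|lborel. gs y) \<longlongrightarrow> (LINT y:{..0}|lborel. gs y)) at_bot"
    by (intro tendsto_set_lebesgue_integral_at_bot gs_set_integrable) auto
  have "sqrt pi = (LINT y:({..0} \<union> {0<..})|lborel. gs y)"
  proof -
    have "{..0} \<union> {0<..} = (UNIV::real set)" by auto
    then show ?thesis using gs_integral by (simp add: set_lebesgue_integral_def)
  qed
  also have "\<dots> = (LINT y:{..0}|lborel. gs y) + (LINT y:{0<..}|lborel. gs y)"
    by (intro set_integral_Un gs_set_integrable) auto
  finally have sp: "sqrt pi = (LINT y:{..0}|lborel. gs y) + (LINT y:{0<..}|lborel. gs y)" .
  have ev: "eventually (\<lambda>a. (LINT y:{a..0}|lborel. gs y) + (LINT y:{0<..}|lborel. gs y) = Phi a) at_bot"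
    unfolding eventually_at_bot_linorder
  proof (intro exI[of _ 0] allI impI)
    fix a :: real assume "a \<le> 0"
    then have "{a..0} \<union> {0<..} = {a..}" by auto
    moreover have "(LINT y:({a..0} \<union> {0<..})|lborel. gs y) = (LINT y:{a..0}|lborel. gs y) + (LINT y:{0<..}|lborel. gs y)"
      by (intro set_integral_Un gs_set_integrable) auto
    ultimately show "(LINT y:{a..0}|lborel. gs y) + (LINT y:{0<..}|lborel. gs y) = Phi a"
      by (simp add: Phi_LINT)
  qed
  have "((\<lambda>a. (LINT y:{a..0}|lborel. gs y) + (LINT y:{0<..}|lborel. gs y)) \<longlongrightarrow> sqrt pi) at_bot"
    unfolding sp by (intro tendsto_add L tendsto_const)
  then show ?thesis using ev by (rule Lim_transform_eventually)
qed



definition EE :: "real \<Rightarrow> real \<Rightarrow> real \<Rightarrow> real" where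
  "EE b mu M = exp (b * M / (2 * mu))"
definition Dz :: "real \<Rightarrow> real \<Rightarrow> real \<Rightarrow> real \<Rightarrow> real" where
  "Dz b mu M z = sqrt pi + (EE b mu M - 1) * Phi (z / sqrt (4 * mu))"
definition Dl :: "real \<Rightarrow> real \<Rightarrow> real \<Rightarrow> real" where
  "Dl b mu M = sqrt pi * min 1 (EE b mu M)"
definition Du :: "real \<Rightarrow> real \<Rightarrow> real \<Rightarrow> real" where
  "Du b mu M = sqrt pi * max 1 (EE b mu M)"

lemma EE_pos: "EE b mu M > 0" by (simp add: EE_def)

lemma Dl_pos: "Dl b mu M > 0" using EE_pos[of b mu M] by (simp add: Dl_def)

lemma Dz_bounds: "Dl b mu M \<le> Dz b mu M z" "Dz b mu M z \<le> Du b mu M"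
proof -
  define E where "E = EE b mu M"
  define P where "P = Phi (z / sqrt (4 * mu))"
  have P: "0 \<le> P" "P \<le> sqrt pi" unfolding P_def by (rule Phi_nonneg, rule Phi_le)
  have D: "Dz b mu M z = sqrt pi + (E - 1) * P" unfolding Dz_def E_def P_def by simp
  show "Dl b mu M \<le> Dz b mu M z"
  proof (cases "E \<ge> 1")
    case True
    then have "0 \<le> (E - 1) * P" using P by simp
    then show ?thesis using True unfolding D Dl_def E_def[symmetric] by simp
  next
    case False
    then have "(E - 1) * sqrt pi \<le> (E - 1) * P" using P by (intro mult_left_mono_neg) auto
    then show ?thesis using False unfolding D Dl_def E_def[symmetric] by (simp add: algebra_simps)
  qed
  show "Dz b mu M z \<le> Du b mu M"
  proof (cases "E \<ge> 1")
    case True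
    then have "(E - 1) * P \<le> (E - 1) * sqrt pi" using P by (intro mult_left_mono) auto
    then show ?thesis using True unfolding D Du_def E_def[symmetric] by (simp add: algebra_simps)
  next
    case False
    then have "(E - 1) * P \<le> 0" using P by (simp add: mult_nonpos_nonneg)
    then show ?thesis using False unfolding D Du_def E_def[symmetric] by simp
  qed
qed

lemma Dz_pos: "Dz b mu M z > 0"
  using Dz_bounds(1)[of b mu M z] Dl_pos[of b mu M] by linarith

lemma Dz_deriv:
  assumes "mu > 0"
  shows "(Dz b mu M has_real_derivative
     ((EE b mu M - 1) * (- gs (z / sqrt (4 * mu))) * (1 / sqrt (4 * mu)))) (at z)"
proof -
  have "((\<lambda>x. x / sqrt (4*mu)) has_real_derivative 1 / sqrt (4*mu)) (at z)"
    using DERIV_cdivide[where c="sqrt (4*mu)", OF DERIV_ident] by simp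
  from DERIV_chain2[OF Phi_deriv this]
  have "((\<lambda>x. Phi (x / sqrt (4*mu))) has_real_derivative (- gs (z / sqrt (4 * mu))) * (1 / sqrt (4 * mu))) (at z)" .
  then have "((\<lambda>x. sqrt pi + (EE b mu M - 1) * Phi (x / sqrt (4*mu))) has_real_derivative
     0 + (EE b mu M - 1) * ((- gs (z / sqrt (4 * mu))) * (1 / sqrt (4 * mu)))) (at z)"
    by (intro DERIV_add DERIV_cmult DERIV_const)
  then show ?thesis unfolding Dz_def by (rule DERIV_cong) (simp add: algebra_simps diff_divide_distrib)
qed

lemma Dz_lim:
  assumes "mu > 0"
  shows "(Dz b mu M \<longlongrightarrow> EE b mu M * sqrt pi) at_bot"
proof -
  have "filterlim (\<lambda>z. z / sqrt (4 * mu)) at_bot at_bot"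
    unfolding filterlim_at_bot eventually_at_bot_linorder
  proof
    fix Z :: real
    show "\<exists>N. \<forall>n\<le>N. n / sqrt (4 * mu) \<le> Z"
      using assms by (intro exI[of _ "Z * sqrt (4 * mu)"]) (auto simp: divide_le_eq)
  qed
  then have "((\<lambda>z. Phi (z / sqrt (4 * mu))) \<longlongrightarrow> sqrt pi) at_bot"
    by (rule filterlim_compose[OF Phi_lim])
  then have "(Dz b mu M \<longlongrightarrow> sqrt pi + (EE b mu M - 1) * sqrt pi) at_bot"
    unfolding Dz_def by (intro tendsto_intros)
  then show ?thesis by (simp add: algebra_simps)
qed

lemma chi_star_eq:
  assumes "mu > 0"
  shows "chi_star b mu M z = sqrt mu / b * ((EE b mu M - 1) * gs (z / sqrt (4 * mu))) / Dz b mu M z"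
proof -
  have "gs (z / sqrt (4 * mu)) = exp (- (z\<^sup>2) / (4 * mu))"
    using assms by (simp add: gs_def power_divide)
  moreover have "(\<lambda>y. exp (- (y\<^sup>2))) = gs" by (simp add: gs_def fun_eq_iff)
  ultimately show ?thesis
    unfolding chi_star_def Dz_def Phi_def EE_def by simp
qed

definition Hf :: "real \<Rightarrow> real \<Rightarrow> real \<Rightarrow> real \<Rightarrow> real" where
  "Hf b mu M z = - (2 * mu / b) * ln (Dz b mu M z)"

lemma Hf_deriv:
  assumes "mu > 0" "b \<noteq> 0"
  shows "(Hf b mu M has_real_derivative chi_star b mu M z) (at z)"
proof -
  have d: "(Hf b mu M has_real_derivative
      - (2 * mu / b) * (1 / Dz b mu M z * ((EE b mu M - 1) * (- gs (z / sqrt (4 * mu))) * (1 / sqrt (4 * mu))))) (at z)"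
    unfolding Hf_def
    by (intro DERIV_cmult DERIV_chain2[OF DERIV_ln_divide[OF Dz_pos] Dz_deriv[OF assms(1)]])
  have s4: "sqrt (4 * mu) = 2 * sqrt mu" by (simp add: real_sqrt_mult)
  have sm: "mu = sqrt mu * sqrt mu" using assms by simp
  have alg: "- (2 * m / b) * (1 / xD * (xe * (- xg) * (1 / r))) = xs / b * (xe * xg) / xD"
    if "xs > 0" "m = xs*xs" "r = 2*xs" "b \<noteq> 0" "xD \<noteq> 0" for xs m r xe xg xD :: real
    using that by (simp add: field_simps)
  have "- (2 * mu / b) * (1 / Dz b mu M z * ((EE b mu M - 1) * (- gs (z / sqrt (4 * mu))) * (1 / sqrt (4 * mu))))
      = sqrt mu / b * ((EE b mu M - 1) * gs (z / sqrt (4 * mu))) / Dz b mu M z"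
    by (rule alg) (use assms s4 sm Dz_pos[of b mu M z] in auto)
  then show ?thesis using d chi_star_eq[OF assms(1)] by simp
qed

lemma powr_mhalf: "u > 0 \<Longrightarrow> u powr (- 1 / 2) = 1 / sqrt (u::real)"
proof -
  assume u: "u > 0"
  have "u powr (- 1 / 2) = u powr (- (1 / 2))" by simp
  also have "\<dots> = inverse (u powr (1 / 2))" by (rule powr_minus)
  also have "u powr (1 / 2) = sqrt u" by (rule powr_half_sqrt) (use u in simp)
  finally show ?thesis by (simp only: inverse_eq_divide)
qed

definition zt :: "real \<Rightarrow> real \<Rightarrow> real \<Rightarrow> real" where
  "zt a t x = (x - a * (1 + t)) / sqrt (1 + t)"

lemma zt_deriv: "((zt a t) has_real_derivative 1 / sqrt (1 + t)) (at x)"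
proof -
  have "((\<lambda>x. (x - a * (1 + t)) / sqrt (1 + t)) has_real_derivative (1 - 0) / sqrt (1 + t)) (at x)"
    by (intro DERIV_cdivide DERIV_diff DERIV_ident DERIV_const)
  then show ?thesis unfolding zt_def by simp
qed

lemma zt_lim: assumes "t > -1" shows "filterlim (zt a t) at_bot at_bot"
  unfolding filterlim_at_bot eventually_at_bot_linorder
proof
  fix Z :: real
  have s: "sqrt (1 + t) > 0" using assms by simp
  have "zt a t n \<le> Z" if "n \<le> Z * sqrt (1 + t) + a * (1 + t)" for n
  proof -
    have "n - a * (1 + t) \<le> Z * sqrt (1 + t)" using that by linarith
    then show ?thesis unfolding zt_def by (subst pos_divide_le_eq[OF s])
  qed
  then show "\<exists>N. \<forall>n\<le>N. zt a t n \<le> Z" by blast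
qed

lemma chi_eq: assumes "t > -1"
  shows "chi a b mu M x t = chi_star b mu M (zt a t x) * (1 / sqrt (1 + t))"
proof -
  have "(1 + t) powr (- 1 / 2) = 1 / sqrt (1 + t)" by (rule powr_mhalf) (use assms in simp)
  then show ?thesis unfolding chi_def zt_def by (simp only: mult.commute)
qed

lemma eta_closed:
  assumes "mu > 0" "b \<noteq> 0" "t > -1"
  shows "eta a b mu M x t = EE b mu M * sqrt pi / Dz b mu M (zt a t x)"
proof -
  define L where "L = - (2 * mu / b) * ln (EE b mu M * sqrt pi)"
  have der: "((\<lambda>y. Hf b mu M (zt a t y)) has_real_derivative chi a b mu M w t) (at w)" for w
    unfolding chi_eq[OF assms(3)]
    by (rule DERIV_chain2[OF Hf_deriv[OF assms(1,2)] zt_deriv])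
  have "((\<lambda>z. Hf b mu M z) \<longlongrightarrow> L) at_bot"
    unfolding Hf_def L_def
    by (intro tendsto_mult_left tendsto_ln Dz_lim assms(1)) (use EE_pos[of b mu M] in simp)
  then have lim: "((\<lambda>y. Hf b mu M (zt a t y)) \<longlongrightarrow> L) at_bot"
    by (rule filterlim_compose[OF _ zt_lim[OF assms(3)]])
  have "((\<lambda>y. chi a b mu M y t) has_integral (Hf b mu M (zt a t x) - L)) {..x}"
    by (rule improper_ftc[OF der lim])
  then have I: "integral {..x} (\<lambda>y. chi a b mu M y t) = Hf b mu M (zt a t x) - L"
    by (rule integral_unique)
  have "b / (2 * mu) * (Hf b mu M (zt a t x) - L) = ln (EE b mu M * sqrt pi) - ln (Dz b mu M (zt a t x))"
    unfolding Hf_def L_def using assms by (simp add: field_simps)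
  then have "eta a b mu M x t = exp (ln (EE b mu M * sqrt pi) - ln (Dz b mu M (zt a t x)))"
    unfolding eta_def I by simp
  also have "\<dots> = EE b mu M * sqrt pi / Dz b mu M (zt a t x)"
    by (simp add: exp_diff EE_pos Dz_pos)
  finally show ?thesis .
qed

definition etal :: "real \<Rightarrow> real \<Rightarrow> real \<Rightarrow> real" where
  "etal b mu M = EE b mu M * sqrt pi / Du b mu M"
definition etau :: "real \<Rightarrow> real \<Rightarrow> real \<Rightarrow> real" where
  "etau b mu M = EE b mu M * sqrt pi / Dl b mu M"
definition K1 :: "real \<Rightarrow> real \<Rightarrow> real \<Rightarrow> real" where
  "K1 b mu M = EE b mu M * sqrt pi * (\<bar>EE b mu M - 1\<bar> / sqrt (4 * mu)) / (Dl b mu M)\<^sup>2"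

lemma Du_pos: "Du b mu M > 0" using Dz_bounds[of b mu M 0] Dz_pos[of b mu M 0] by linarith

lemma etal_pos: "etal b mu M > 0"
  unfolding etal_def using EE_pos[of b mu M] Du_pos[of b mu M] by simp

lemma eta_bounds:
  assumes "mu > 0" "b \<noteq> 0" "t > -1"
  shows "etal b mu M \<le> eta a b mu M x t" "eta a b mu M x t \<le> etau b mu M"
proof -
  have p: "EE b mu M * sqrt pi > 0" using EE_pos[of b mu M] by simp
  show "etal b mu M \<le> eta a b mu M x t"
    unfolding eta_closed[OF assms] etal_def
    using Dz_bounds[of b mu M] Dz_pos[of b mu M] p Du_pos[of b mu M] by (intro divide_left_mono) auto
  show "eta a b mu M x t \<le> etau b mu M"
    unfolding eta_closed[OF assms] etau_def
    using Dz_bounds[of b mu M] Dz_pos[of b mu M] Dl_pos p by (intro divide_left_mono) auto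
qed

lemma eta_deriv:
  assumes "mu > 0" "b \<noteq> 0" "t > -1"
  shows "\<exists>d. ((\<lambda>x'. eta a b mu M x' t) has_real_derivative d) (at x) \<and> \<bar>d\<bar> \<le> K1 b mu M * (1 / sqrt (1 + t))"
proof -
  define E where "E = EE b mu M"
  define z where "z = zt a t x"
  define Dd where "Dd = (E - 1) * (- gs (z / sqrt (4 * mu))) * (1 / sqrt (4 * mu))"
  have fe: "(\<lambda>x'. eta a b mu M x' t) = (\<lambda>x'. E * sqrt pi * inverse (Dz b mu M (zt a t x')))"
    using eta_closed[OF assms] by (simp add: E_def fun_eq_iff divide_inverse)
  have dz: "((\<lambda>x'. Dz b mu M (zt a t x')) has_real_derivative Dd * (1 / sqrt (1 + t))) (at x)"
    unfolding Dd_def E_def z_def by (rule DERIV_chain2[OF Dz_deriv[OF assms(1)] zt_deriv])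
  have d: "((\<lambda>x'. E * sqrt pi * inverse (Dz b mu M (zt a t x'))) has_real_derivative
      - (E * sqrt pi) * (Dd * (1 / sqrt (1 + t))) / (Dz b mu M z)\<^sup>2) (at x)"
  proof -
    have nz: "Dz b mu M w \<noteq> 0" for w using Dz_pos[of b mu M w] by simp
    show ?thesis
    by (intro DERIV_cong[OF DERIV_cmult[OF DERIV_inverse_fun[OF dz]]])
       (auto simp: z_def divide_inverse power2_eq_square nz)
  qed
  have s1: "sqrt (1 + t) > 0" using assms by simp
  have s4: "sqrt (4 * mu) > 0" using assms by simp
  have Dd: "\<bar>Dd\<bar> \<le> \<bar>E - 1\<bar> / sqrt (4 * mu)"
  proof -
    have "\<bar>Dd\<bar> = \<bar>E - 1\<bar> * gs (z / sqrt (4 * mu)) / sqrt (4 * mu)"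
      unfolding Dd_def using s4 gs_pos[of "z / sqrt (4 * mu)"] by (simp add: abs_mult)
    also have "\<dots> \<le> \<bar>E - 1\<bar> * 1 / sqrt (4 * mu)"
      using s4 gs_le1 by (intro divide_right_mono mult_left_mono) auto
    finally show ?thesis by simp
  qed
  have Dl: "(Dl b mu M)\<^sup>2 \<le> (Dz b mu M z)\<^sup>2"
    using Dz_bounds(1)[of b mu M z] Dl_pos[of b mu M] by (intro power_mono) auto
  have "\<bar>- (E * sqrt pi) * (Dd * (1 / sqrt (1 + t))) / (Dz b mu M z)\<^sup>2\<bar>
      = (E * sqrt pi) * \<bar>Dd\<bar> / (Dz b mu M z)\<^sup>2 * (1 / sqrt (1 + t))"
    using s1 EE_pos[of b mu M] by (simp add: abs_mult E_def)
  also have "\<dots> \<le> (E * sqrt pi) * (\<bar>E - 1\<bar> / sqrt (4 * mu)) / (Dl b mu M)\<^sup>2 * (1 / sqrt (1 + t))"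
  proof -
    have Ep: "E * sqrt pi > 0" using EE_pos[of b mu M] by (simp add: E_def)
    have A: "(E * sqrt pi) * \<bar>Dd\<bar> \<le> (E * sqrt pi) * (\<bar>E - 1\<bar> / sqrt (4 * mu))"
      using Ep Dd by (intro mult_left_mono) auto
    have nn: "0 \<le> (E * sqrt pi) * (\<bar>E - 1\<bar> / sqrt (4 * mu))"
      using Ep s4 EE_pos[of b mu M] by (intro mult_nonneg_nonneg divide_nonneg_nonneg) (auto simp: E_def)
    have B: "(E * sqrt pi) * \<bar>Dd\<bar> / (Dz b mu M z)\<^sup>2 \<le> (E * sqrt pi) * (\<bar>E - 1\<bar> / sqrt (4 * mu)) / (Dl b mu M)\<^sup>2"
      by (rule frac_le[OF nn A _ Dl]) (use Dl_pos[of b mu M] in simp)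
    show ?thesis using s1 by (intro mult_right_mono[OF B]) simp
  qed
  also have "\<dots> = K1 b mu M * (1 / sqrt (1 + t))"
    unfolding K1_def E_def by (rule refl)
  finally have X: "\<bar>- (E * sqrt pi) * (Dd * (1 / sqrt (1 + t))) / (Dz b mu M z)\<^sup>2\<bar> \<le> K1 b mu M * (1 / sqrt (1 + t))" .
  show ?thesis unfolding fe by (rule exI, rule conjI[OF d X])
qed

lemma G0_deriv:
  assumes "mu > 0" "s > 0"
  shows "((\<lambda>w. G0 a mu w s) has_real_derivative (- (w - a * s) / (2 * mu * s) * G0 a mu w s)) (at w)"
proof -
  have sq: "((\<lambda>w. (w - a * s)\<^sup>2) has_real_derivative 2 * (w - a * s)) (at w)"
    by (auto intro!: derivative_eq_intros)
  have "((\<lambda>w. 1 / sqrt (4 * pi * mu * s) * exp (- ((w - a * s)\<^sup>2) / (4 * mu * s))) has_real_derivative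
      1 / sqrt (4 * pi * mu * s) * (exp (- ((w - a * s)\<^sup>2) / (4 * mu * s)) * (- (2 * (w - a * s)) / (4 * mu * s)))) (at w)"
    by (intro DERIV_cmult DERIV_fun_exp DERIV_cdivide DERIV_minus sq)
  then show ?thesis unfolding G0_def
    by (rule DERIV_cong) (use assms in \<open>simp add: field_simps\<close>)
qed

lemma exp_half_bound:
  assumes "A > 0"
  shows "\<bar>v\<bar> * exp (- (v\<^sup>2) / A) \<le> sqrt A * exp (- (v\<^sup>2) / (2 * A))"
proof -
  define w where "w = v\<^sup>2 / (2 * A)"
  have w0: "w \<ge> 0" unfolding w_def using assms by simp
  have e: "exp (- (v\<^sup>2) / A) = exp (- w) * exp (- w)"
    unfolding w_def using assms by (simp add: exp_add[symmetric] field_simps)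
  have "w \<le> exp (2 * w)" using exp_ge_add_one_self[of "2 * w"] w0 by linarith
  then have "v\<^sup>2 * (exp (- w))\<^sup>2 \<le> A"
  proof -
    have "(exp (- w))\<^sup>2 = exp (- w + - w)" by (simp only: power2_eq_square exp_add)
    also have "- w + - w = - (2 * w)" by simp
    finally have "(exp (- w))\<^sup>2 = inverse (exp (2 * w))" by (simp only: exp_minus)
    moreover have "v\<^sup>2 = 2 * A * w" unfolding w_def using assms by simp
    ultimately have "v\<^sup>2 * (exp (- w))\<^sup>2 = 2 * A * (w / exp (2 * w))" by (simp add: divide_inverse)
    also have "\<dots> \<le> 2 * A * (1 / 2)"
    proof -
      have "w / exp (2 * w) \<le> 1 / 2"
      proof -
        have "2 * w \<le> exp (2 * w)"
          using exp_ge_add_one_self[of "2 * w"] w0 by linarith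
        then show ?thesis by (simp add: divide_le_eq)
      qed
      then show ?thesis using assms by (intro mult_left_mono) auto
    qed
    finally show ?thesis by simp
  qed
  then have "(\<bar>v\<bar> * exp (- w))\<^sup>2 \<le> A" by (simp only: power_mult_distrib power2_abs)
  then have "\<bar>v\<bar> * exp (- w) \<le> sqrt A" by (rule real_le_rsqrt)
  then have "\<bar>v\<bar> * exp (- w) * exp (- w) \<le> sqrt A * exp (- w)"
    by (intro mult_right_mono) auto
  moreover have "exp (- (v\<^sup>2) / (2 * A)) = exp (- w)" unfolding w_def by simp
  ultimately show ?thesis unfolding e by (simp add: mult.assoc)
qed

definition kern :: "real \<Rightarrow> real \<Rightarrow> real \<Rightarrow> real \<Rightarrow> real" where
  "kern mu s m y = exp (- ((y - m)\<^sup>2) / (8 * mu * s))"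

lemma G0_bound:
  assumes "mu > 0" "s > 0"
  shows "\<bar>G0 a mu (x - y) s\<bar> \<le> 1 / sqrt (4 * pi * mu * s) * kern mu s (x - a * s) y"
proof -
  have "exp (- (((x - y) - a * s)\<^sup>2) / (4 * mu * s)) \<le> exp (- ((y - (x - a * s))\<^sup>2) / (8 * mu * s))"
  proof -
    have "((x - y) - a * s)\<^sup>2 = (y - (x - a * s))\<^sup>2" by (simp add: power2_eq_square algebra_simps)
    moreover have "- (r) / (4 * mu * s) \<le> - r / (8 * mu * s)" if "r \<ge> 0" for r
      using that assms by (simp add: divide_simps)
    ultimately show ?thesis by simp
  qed
  then have "1 / sqrt (4 * pi * mu * s) * exp (- (((x - y) - a * s)\<^sup>2) / (4 * mu * s))
     \<le> 1 / sqrt (4 * pi * mu * s) * exp (- ((y - (x - a * s))\<^sup>2) / (8 * mu * s))"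
    using assms by (intro mult_left_mono) auto
  moreover have "\<bar>1 / sqrt (4 * pi * mu * s) * exp (- (((x - y) - a * s)\<^sup>2) / (4 * mu * s))\<bar>
     = 1 / sqrt (4 * pi * mu * s) * exp (- (((x - y) - a * s)\<^sup>2) / (4 * mu * s))"
    using assms by simp
  ultimately show ?thesis unfolding G0_def kern_def by simp
qed

lemma G0'_bound:
  assumes "mu > 0" "s > 0"
  shows "\<bar>- ((x - y) - a * s) / (2 * mu * s) * G0 a mu (x - y) s\<bar>
     \<le> 1 / (2 * mu * sqrt pi) * (1 / s) * kern mu s (x - a * s) y"
proof -
  define v where "v = (x - y) - a * s"
  have v2: "(y - (x - a * s))\<^sup>2 = v\<^sup>2" unfolding v_def by (simp add: power2_eq_square algebra_simps)
  have pos: "4 * mu * s > 0" using assms by simp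
  have "\<bar>- v / (2 * mu * s) * G0 a mu (x - y) s\<bar>
      = 1 / (2 * mu * s) * (1 / sqrt (4 * pi * mu * s)) * (\<bar>v\<bar> * exp (- (v\<^sup>2) / (4 * mu * s)))"
    unfolding G0_def v_def using assms by (simp add: abs_mult abs_divide)
  also have "\<dots> \<le> 1 / (2 * mu * s) * (1 / sqrt (4 * pi * mu * s)) * (sqrt (4 * mu * s) * exp (- (v\<^sup>2) / (2 * (4 * mu * s))))"
    using exp_half_bound[OF pos, of v] assms by (intro mult_left_mono) auto
  also have "\<dots> = 1 / (2 * mu * s) * (sqrt (4 * mu * s) / sqrt (4 * pi * mu * s)) * exp (- (v\<^sup>2) / (2 * (4 * mu * s)))"
    by (simp only: divide_inverse mult_1 mult.assoc mult.left_commute)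
  also have "sqrt (4 * mu * s) / sqrt (4 * pi * mu * s) = 1 / sqrt pi"
  proof -
    have "sqrt (4 * mu * s) / sqrt (4 * pi * mu * s) = sqrt ((4 * mu * s) / (4 * pi * mu * s))"
      by (rule real_sqrt_divide[symmetric])
    also have "(4 * mu * s) / (4 * pi * mu * s) = 1 / pi" using assms by (simp add: field_simps)
    also have "sqrt (1 / pi) = 1 / sqrt pi" by (simp add: real_sqrt_divide)
    finally show ?thesis .
  qed
  also have "exp (- (v\<^sup>2) / (2 * (4 * mu * s))) = kern mu s (x - a * s) y"
    unfolding kern_def v2 by (simp add: mult.assoc)
  also have "1 / (2 * mu * s) * (1 / sqrt pi) * kern mu s (x - a * s) y
     = 1 / (2 * mu * sqrt pi) * (1 / s) * kern mu s (x - a * s) y"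
    by (simp add: field_simps)
  finally show ?thesis unfolding v_def .
qed

lemma pq_cases:
  fixes p q :: ereal
  assumes "1 \<le> p" "1 \<le> q" "1 / p + 1 / q = 1"
  shows "(p = \<infinity> \<and> q = 1) \<or> (p = 1 \<and> q = \<infinity>) \<or>
    (\<exists>pr qr. p = ereal pr \<and> q = ereal qr \<and> pr > 1 \<and> qr > 1 \<and> 1 / pr + 1 / qr = 1)"
proof (cases p)
  case (real pr)
  then have pr: "pr \<ge> 1" using assms(1) by simp
  show ?thesis
  proof (cases q)
    case (real qr)
    then have qr: "qr \<ge> 1" using assms(2) by simp
    have "ereal (1 / pr + 1 / qr) = 1"
      using assms(3) pr qr \<open>p = ereal pr\<close> \<open>q = ereal qr\<close> by (simp add: one_ereal_def ereal_divide)
    then have e: "1 / pr + 1 / qr = 1" by (simp add: one_ereal_def)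
    have "pr > 1"
    proof (rule ccontr)
      assume "\<not> pr > 1" then have "pr = 1" using pr by simp
      then have "1 / qr = 0" using e by simp
      then show False using qr by simp
    qed
    moreover have "qr > 1"
    proof (rule ccontr)
      assume "\<not> qr > 1" then have "qr = 1" using qr by simp
      then have "1 / pr = 0" using e by simp
      then show False using pr by simp
    qed
    ultimately show ?thesis using e \<open>p = ereal pr\<close> \<open>q = ereal qr\<close> by blast
  next
    case PInf
    then have "ereal (1 / pr) = 1" using assms(3) pr \<open>p = ereal pr\<close> by (simp add: one_ereal_def ereal_divide)
    then have "pr = 1" using pr by (simp add: one_ereal_def)
    then show ?thesis using PInf \<open>p = ereal pr\<close> by (simp add: one_ereal_def)
  next
    case MInf then show ?thesis using assms(2) by simp
  qed
next
  case PInf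
  then have "1 / q = 1" using assms(3) by simp
  moreover have "q \<noteq> \<infinity>" using calculation by auto
  ultimately have "q = 1" using assms(2)
    by (cases q) (auto simp: one_ereal_def ereal_divide split: if_splits)
  then show ?thesis using PInf by simp
next
  case MInf then show ?thesis using assms(1) by simp
qed

lemma kern_eq: assumes "mu > 0" "s > 0"
  shows "kern mu s m y = sqrt (8 * pi * mu * s) * normal_density m (sqrt (4 * mu * s)) y"
  using assms unfolding kern_def normal_density_def by (simp add: real_sqrt_mult field_simps)

lemma kern_integrable: assumes "mu > 0" "s > 0" shows "integrable lborel (kern mu s m)"
proof -
  have "sqrt (4 * mu * s) > 0" using assms by simp
  then show ?thesis unfolding kern_eq[OF assms, abs_def] by simp
qed

lemma kern_integral: assumes "mu > 0" "s > 0" shows "(\<integral>y. kern mu s m y \<partial>lborel) = sqrt (8 * pi * mu * s)"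
proof -
  have "sqrt (4 * mu * s) > 0" using assms by simp
  then show ?thesis unfolding kern_eq[OF assms] by simp
qed

lemma kern_pos: "kern mu s m y > 0" by (simp add: kern_def)

lemma kern_le1: assumes "mu > 0" "s > 0" shows "kern mu s m y \<le> 1"
  using assms unfolding kern_def by (simp add: divide_nonneg_pos)

lemma kern_meas[measurable]: "kern mu s m \<in> borel_measurable borel"
  unfolding kern_def[abs_def] by measurable

lemma young_pw:
  fixes pr qr K G k L :: real
  assumes "pr > 1" "qr > 1" "1 / pr + 1 / qr = 1" "K > 0" "G > 0" "k > 0" "k \<le> 1" "L \<ge> 0"
  shows "k * L \<le> K powr (1 / pr) * G powr (1 / qr) * (k / (pr * K) + L powr qr / (qr * G))"
proof -
  define \<alpha> where "\<alpha> = K powr (1 / pr)"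
  define \<beta> where "\<beta> = G powr (1 / qr)"
  have \<alpha>: "\<alpha> > 0" and \<beta>: "\<beta> > 0" using assms by (auto simp: \<alpha>_def \<beta>_def)
  define X where "X = k powr (1 / pr) / \<alpha>"
  define Y where "Y = k powr (1 / qr) * L / \<beta>"
  have X0: "X \<ge> 0" and Y0: "Y \<ge> 0" using \<alpha> \<beta> assms by (auto simp: X_def Y_def)
  have XY: "X * Y = k * L / (\<alpha> * \<beta>)"
  proof -
    have "k powr (1 / pr) * k powr (1 / qr) = k" using assms by (simp add: powr_add[symmetric])
    then show ?thesis unfolding X_def Y_def by (simp add: field_simps)
  qed
  have Xp: "X powr pr = k / K"
  proof -
    have "X powr pr = (k powr (1 / pr)) powr pr / \<alpha> powr pr"
      unfolding X_def using assms \<alpha> by (simp add: powr_divide)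
    also have "(k powr (1 / pr)) powr pr = k" using assms by (simp add: powr_powr)
    also have "\<alpha> powr pr = K" unfolding \<alpha>_def using assms by (simp add: powr_powr)
    finally show ?thesis .
  qed
  have Yq: "Y powr qr \<le> L powr qr / G"
  proof -
    have "Y powr qr = (k powr (1 / qr)) powr qr * L powr qr / \<beta> powr qr"
      unfolding Y_def using assms \<beta> by (simp add: powr_divide powr_mult)
    also have "(k powr (1 / qr)) powr qr = k" using assms by (simp add: powr_powr)
    also have "\<beta> powr qr = G" unfolding \<beta>_def using assms by (simp add: powr_powr)
    finally have "Y powr qr = k * L powr qr / G" .
    also have "\<dots> \<le> 1 * L powr qr / G" using assms by (intro divide_right_mono mult_right_mono) auto
    finally show ?thesis by simp
  qed
  have "X * Y \<le> X powr pr / pr + Y powr qr / qr"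
    by (rule Youngs_inequality) (use assms X0 Y0 in auto)
  also have "\<dots> \<le> k / K / pr + L powr qr / G / qr"
    using Yq assms unfolding Xp by (intro add_left_mono divide_right_mono) auto
  finally have "k * L / (\<alpha> * \<beta>) \<le> k / (pr * K) + L powr qr / (qr * G)"
    unfolding XY by (simp add: field_simps)
  then have "k * L \<le> (\<alpha> * \<beta>) * (k / (pr * K) + L powr qr / (qr * G))"
    using \<alpha> \<beta> by (simp add: divide_le_eq mult.commute)
  then show ?thesis unfolding \<alpha>_def \<beta>_def .
qed

lemma powr_le_1plus: assumes "x \<ge> 0" "0 \<le> e" "e \<le> 1" shows "x powr e \<le> 1 + (x::real)"
proof (cases "x \<le> 1")
  case True
  then have "x powr e \<le> 1" using assms by (intro powr_le1) auto
  then show ?thesis using assms by simp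
next
  case False
  then have "x powr e \<le> x powr 1" using assms by (intro powr_mono) auto
  then show ?thesis using False by simp
qed

lemma sqrt_le_1plus: "x \<ge> 0 \<Longrightarrow> sqrt x \<le> 1 + (x::real)"
  using powr_le_1plus[of x "1/2"] by (simp add: powr_half_sqrt)

lemma holder_fin:
  assumes "mu > 0" "s > 0" "pr > 1" "qr > 1" "1 / pr + 1 / qr = 1"
    and meas: "l \<in> borel_measurable lborel" and intq: "integrable lborel (\<lambda>x. \<bar>l x\<bar> powr qr)"
  shows "integrable lborel (\<lambda>y. kern mu s m y * \<bar>l y\<bar>)"
    "(\<integral>y. kern mu s m y * \<bar>l y\<bar> \<partial>lborel) \<le> sqrt (8 * pi * mu * s) powr (1 / pr) * (\<integral>x. \<bar>l x\<bar> powr qr \<partial>lborel) powr (1 / qr)"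
proof -
  define G where "G = (\<integral>x. \<bar>l x\<bar> powr qr \<partial>lborel)"
  define K where "K = sqrt (8 * pi * mu * s)"
  have K: "K > 0" unfolding K_def using assms by simp
  have G0: "G \<ge> 0" unfolding G_def by (intro integral_nonneg_AE) auto
  have m1: "(\<lambda>y. kern mu s m y * \<bar>l y\<bar>) \<in> borel_measurable lborel" using meas by measurable
  have "integrable lborel (\<lambda>y. kern mu s m y * \<bar>l y\<bar>) \<and>
    (\<integral>y. kern mu s m y * \<bar>l y\<bar> \<partial>lborel) \<le> K powr (1 / pr) * G powr (1 / qr)"
  proof (cases "G = 0")
    case True
    then have "AE x in lborel. \<bar>l x\<bar> powr qr = 0"
      using integral_nonneg_eq_0_iff_AE[OF intq] unfolding G_def by auto
    then have ae: "AE x in lborel. 0 = kern mu s m x * \<bar>l x\<bar>"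
      by eventually_elim simp
    have i: "integrable lborel (\<lambda>y. kern mu s m y * \<bar>l y\<bar>)"
      by (rule integrable_cong_AE_imp[OF integrable_zero m1 ae])
    have "(\<integral>y. kern mu s m y * \<bar>l y\<bar> \<partial>lborel) = (\<integral>y. 0 \<partial>(lborel::real measure))"
      by (rule integral_cong_AE) (use m1 ae in auto)
    then show ?thesis using i K True by simp
  next
    case False
    then have G: "G > 0" using G0 by simp
    define B where "B y = K powr (1 / pr) * G powr (1 / qr) * (kern mu s m y / (pr * K) + \<bar>l y\<bar> powr qr / (qr * G))" for y
    have iB: "integrable lborel B"
      unfolding B_def using kern_integrable[OF assms(1,2), of m] intq by auto
    have pw: "kern mu s m y * \<bar>l y\<bar> \<le> B y" for y
      unfolding B_def by (rule young_pw) (use assms K G kern_pos kern_le1 in auto)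
    have i: "integrable lborel (\<lambda>y. kern mu s m y * \<bar>l y\<bar>)"
    proof (rule Bochner_Integration.integrable_bound[OF iB m1])
      show "AE x in lborel. norm (kern mu s m x * \<bar>l x\<bar>) \<le> norm (B x)"
        using pw kern_pos[of mu s m] by (auto intro!: AE_I2 simp: abs_mult abs_of_pos[OF kern_pos] intro: order_trans[OF _ abs_ge_self])
    qed
    have "(\<integral>y. kern mu s m y * \<bar>l y\<bar> \<partial>lborel) \<le> (\<integral>y. B y \<partial>lborel)"
      by (intro integral_mono i iB pw)
    also have "(\<integral>y. B y \<partial>lborel) = K powr (1 / pr) * G powr (1 / qr) *
        ((\<integral>y. kern mu s m y \<partial>lborel) / (pr * K) + (\<integral>y. \<bar>l y\<bar> powr qr \<partial>lborel) / (qr * G))"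
      unfolding B_def using kern_integrable[OF assms(1,2), of m] intq by simp
    also have "\<dots> = K powr (1 / pr) * G powr (1 / qr) * (1 / pr + 1 / qr)"
      unfolding kern_integral[OF assms(1,2)] G_def[symmetric] K_def[symmetric] using K G assms
      by (simp add: field_simps)
    also have "\<dots> = K powr (1 / pr) * G powr (1 / qr)" using assms by simp
    finally show ?thesis using i by simp
  qed
  then show "integrable lborel (\<lambda>y. kern mu s m y * \<bar>l y\<bar>)"
    "(\<integral>y. kern mu s m y * \<bar>l y\<bar> \<partial>lborel) \<le> sqrt (8 * pi * mu * s) powr (1 / pr) * (\<integral>x. \<bar>l x\<bar> powr qr \<partial>lborel) powr (1 / qr)"
    unfolding K_def G_def by auto
qed

lemma holder_q1:
  assumes "mu > 0" "s > 0"
    and meas: "l \<in> borel_measurable lborel" and intq: "integrable lborel (\<lambda>x. \<bar>l x\<bar> powr 1)"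
  shows "integrable lborel (\<lambda>y. kern mu s m y * \<bar>l y\<bar>)"
    "(\<integral>y. kern mu s m y * \<bar>l y\<bar> \<partial>lborel) \<le> (\<integral>x. \<bar>l x\<bar> powr 1 \<partial>lborel)"
proof -
  have m1: "(\<lambda>y. kern mu s m y * \<bar>l y\<bar>) \<in> borel_measurable lborel" using meas by measurable
  have il: "integrable lborel (\<lambda>x. \<bar>l x\<bar>)" using intq by simp
  have pw: "kern mu s m y * \<bar>l y\<bar> \<le> \<bar>l y\<bar>" for y
    using kern_le1[OF assms(1,2), of m y] kern_pos[of mu s m y] by (intro mult_left_le_one_le) auto
  show i: "integrable lborel (\<lambda>y. kern mu s m y * \<bar>l y\<bar>)"
  proof (rule Bochner_Integration.integrable_bound[OF il m1])
    show "AE x in lborel. norm (kern mu s m x * \<bar>l x\<bar>) \<le> norm (\<bar>l x\<bar>)"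
      using pw kern_pos[of mu s m] by (auto intro!: AE_I2 simp: abs_mult abs_of_pos[OF kern_pos])
  qed
  have "(\<integral>y. kern mu s m y * \<bar>l y\<bar> \<partial>lborel) \<le> (\<integral>x. \<bar>l x\<bar> \<partial>lborel)"
    by (intro integral_mono i il pw)
  then show "(\<integral>y. kern mu s m y * \<bar>l y\<bar> \<partial>lborel) \<le> (\<integral>x. \<bar>l x\<bar> powr 1 \<partial>lborel)" by simp
qed

lemma holder_qinf:
  assumes "mu > 0" "s > 0"
    and meas: "l \<in> borel_measurable lborel" and ess: "esssup lborel (\<lambda>x. ereal \<bar>l x\<bar>) < \<infinity>"
  shows "integrable lborel (\<lambda>y. kern mu s m y * \<bar>l y\<bar>)"
    "(\<integral>y. kern mu s m y * \<bar>l y\<bar> \<partial>lborel) \<le> sqrt (8 * pi * mu * s) * real_of_ereal (esssup lborel (\<lambda>x. ereal \<bar>l x\<bar>))"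
proof -
  define e where "e = esssup lborel (\<lambda>x. ereal \<bar>l x\<bar>)"
  have "esssup lborel (\<lambda>x::real. 0::ereal) \<le> e" unfolding e_def
    using esssup_mono[of "\<lambda>x. 0::ereal" lborel "\<lambda>x. ereal \<bar>l x\<bar>"] by simp
  moreover have "esssup lborel (\<lambda>x::real. 0::ereal) = 0" by (rule esssup_const) simp
  ultimately have e0: "e \<ge> 0" by simp
  have ef: "e = ereal (real_of_ereal e)" using e0 ess unfolding e_def[symmetric] by (cases e) auto
  have ae: "AE x in lborel. \<bar>l x\<bar> \<le> real_of_ereal e"
    using esssup_AE[of "\<lambda>x. ereal \<bar>l x\<bar>" lborel] unfolding e_def[symmetric]
    by eventually_elim (subst (asm) ef, simp)
  have m1: "(\<lambda>y. kern mu s m y * \<bar>l y\<bar>) \<in> borel_measurable lborel" using meas by measurable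
  have ik: "integrable lborel (\<lambda>y. kern mu s m y * real_of_ereal e)"
    using kern_integrable[OF assms(1,2), of m] by simp
  have pw: "AE y in lborel. kern mu s m y * \<bar>l y\<bar> \<le> kern mu s m y * real_of_ereal e"
    using ae by eventually_elim (use kern_pos[of mu s m] in \<open>auto intro: mult_left_mono\<close>)
  show i: "integrable lborel (\<lambda>y. kern mu s m y * \<bar>l y\<bar>)"
  proof (rule Bochner_Integration.integrable_bound[OF ik m1])
    show "AE x in lborel. norm (kern mu s m x * \<bar>l x\<bar>) \<le> norm (kern mu s m x * real_of_ereal e)"
      using pw by eventually_elim (use kern_pos[of mu s m] e0 in \<open>auto simp: abs_mult abs_of_pos[OF kern_pos] abs_ereal_ge0[OF e0]\<close>)
  qed
  have "(\<integral>y. kern mu s m y * \<bar>l y\<bar> \<partial>lborel) \<le> (\<integral>y. kern mu s m y * real_of_ereal e \<partial>lborel)"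
    by (intro integral_mono_AE i ik pw)
  also have "\<dots> = sqrt (8 * pi * mu * s) * real_of_ereal e"
    using kern_integral[OF assms(1,2), of m] by simp
  finally show "(\<integral>y. kern mu s m y * \<bar>l y\<bar> \<partial>lborel) \<le> sqrt (8 * pi * mu * s) * real_of_ereal (esssup lborel (\<lambda>x. ereal \<bar>l x\<bar>))"
    unfolding e_def .
qed

lemma Lq_norm_nonneg: "Lq_norm q l \<ge> 0"
proof (cases "q = \<infinity>")
  case True
  have "esssup lborel (\<lambda>x::real. 0::ereal) \<le> esssup lborel (\<lambda>x. ereal \<bar>l x\<bar>)"
    using esssup_mono[of "\<lambda>x::real. 0::ereal" lborel "\<lambda>x. ereal \<bar>l x\<bar>"] by simp
  moreover have "esssup lborel (\<lambda>x::real. 0::ereal) = 0" by (rule esssup_const) simp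
  ultimately have "esssup lborel (\<lambda>x. ereal \<bar>l x\<bar>) \<ge> 0" by simp
  then show ?thesis using True unfolding Lq_norm_def by (simp add: real_of_ereal_pos)
next
  case False then show ?thesis unfolding Lq_norm_def by simp
qed

lemma holder_kern:
  assumes "mu > 0" "s > 0" "1 \<le> p" "1 \<le> q" "1 / p + 1 / q = 1" "memLq q l"
  shows "integrable lborel (\<lambda>y. kern mu s m y * \<bar>l y\<bar>) \<and>
    (\<integral>y. kern mu s m y * \<bar>l y\<bar> \<partial>lborel) \<le> (1 + 8 * pi * mu) * s powr (real_of_ereal (1 / p) / 2) * Lq_norm q l"
proof -
  have meas: "l \<in> borel_measurable lborel" using assms(6) unfolding memLq_def by simp
  have C: "8 * pi * mu > 0" using assms by simp
  have N0: "Lq_norm q l \<ge> 0" by (rule Lq_norm_nonneg)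
  from pq_cases[OF assms(3,4,5)] show ?thesis
  proof (elim disjE exE conjE)
    assume p: "p = \<infinity>" and q: "q = 1"
    have iq: "integrable lborel (\<lambda>x. \<bar>l x\<bar> powr 1)" using assms(6) q unfolding memLq_def by simp
    note h = holder_q1[OF assms(1,2) meas iq, of m]
    have I0: "(\<integral>x. \<bar>l x\<bar> powr 1 \<partial>lborel) \<ge> 0" by (intro integral_nonneg_AE) auto
    have N: "Lq_norm q l = (\<integral>x. \<bar>l x\<bar> powr 1 \<partial>lborel)" unfolding Lq_norm_def q using I0 by simp
    have "(\<integral>x. \<bar>l x\<bar> powr 1 \<partial>lborel) \<le> (1 + 8 * pi * mu) * (\<integral>x. \<bar>l x\<bar> powr 1 \<partial>lborel)"
      using mult_right_mono[OF _ I0, of 1 "1 + 8 * pi * mu"] C by linarith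
    then show ?thesis using h assms(2) unfolding N p by simp
  next
    assume p: "p = 1" and q: "q = \<infinity>"
    have ess: "esssup lborel (\<lambda>x. ereal \<bar>l x\<bar>) < \<infinity>" using assms(6) q unfolding memLq_def by simp
    note h = holder_qinf[OF assms(1,2) meas ess, of m]
    have N: "Lq_norm q l = real_of_ereal (esssup lborel (\<lambda>x. ereal \<bar>l x\<bar>))" unfolding Lq_norm_def q by simp
    have "sqrt (8 * pi * mu * s) = sqrt (8 * pi * mu) * s powr (1 / 2)"
      using assms by (simp add: real_sqrt_mult powr_half_sqrt)
    also have "\<dots> \<le> (1 + 8 * pi * mu) * s powr (1 / 2)"
      using sqrt_le_1plus[of "8 * pi * mu"] C by (intro mult_right_mono) auto
    finally have "sqrt (8 * pi * mu * s) * Lq_norm q l \<le> (1 + 8 * pi * mu) * s powr (1 / 2) * Lq_norm q l"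
      using N0 by (intro mult_right_mono) auto
    then show ?thesis using h unfolding N p by simp
  next
    fix pr qr assume p: "p = ereal pr" and q: "q = ereal qr" and pq: "pr > 1" "qr > 1" "1 / pr + 1 / qr = 1"
    have iq: "integrable lborel (\<lambda>x. \<bar>l x\<bar> powr qr)" using assms(6) q unfolding memLq_def by simp
    note h = holder_fin[OF assms(1,2) pq meas iq, of m]
    have N: "Lq_norm q l = (\<integral>x. \<bar>l x\<bar> powr qr \<partial>lborel) powr (1 / qr)" unfolding Lq_norm_def q by simp
    have rp: "real_of_ereal (1 / p) = 1 / pr" unfolding p using pq by (simp add: one_ereal_def ereal_divide)
    have "sqrt (8 * pi * mu * s) powr (1 / pr) = (8 * pi * mu) powr (1 / pr / 2) * s powr (1 / pr / 2)"
    proof -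
      have "sqrt (8 * pi * mu * s) = (8 * pi * mu * s) powr (1 / 2)" using assms by (simp add: powr_half_sqrt)
      then have "sqrt (8 * pi * mu * s) powr (1 / pr) = (8 * pi * mu * s) powr (1 / pr / 2)"
        by (simp add: powr_powr mult.commute)
      also have "\<dots> = (8 * pi * mu) powr (1 / pr / 2) * s powr (1 / pr / 2)"
        using assms by (simp add: powr_mult)
      finally show ?thesis .
    qed
    also have "\<dots> \<le> (1 + 8 * pi * mu) * s powr (1 / pr / 2)"
      using powr_le_1plus[of "8 * pi * mu" "1 / pr / 2"] C pq by (intro mult_right_mono) auto
    finally have "sqrt (8 * pi * mu * s) powr (1 / pr) * Lq_norm q l \<le> (1 + 8 * pi * mu) * s powr (1 / pr / 2) * Lq_norm q l"
      using N0 by (intro mult_right_mono) auto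
    then show ?thesis using h unfolding N rp by simp
  qed
qed

lemma F_bound:
  assumes mu: "mu > 0" and b: "b \<noteq> 0" and s: "s > 0" and t: "t > -1" and tau: "tau > -1"
    and d: "((\<lambda>x'. eta a b mu M x' t) has_real_derivative d) (at x)"
    and dle: "\<bar>d\<bar> \<le> K1 b mu M * (1 / sqrt (1 + t))"
  shows "\<bar>deriv (\<lambda>x'. G0 a mu (x' - y) s * eta a b mu M x' t) x * inverse (eta a b mu M y tau) * L\<bar>
    \<le> (1 / (2 * mu * sqrt pi) * etau b mu M / etal b mu M * (1 / s)
        + K1 b mu M / (sqrt (4 * pi * mu) * etal b mu M) * (1 / (sqrt s * sqrt (1 + t))))
       * kern mu s (x - a * s) y * \<bar>L\<bar>"
proof -
  define g' where "g' = - ((x - y) - a * s) / (2 * mu * s) * G0 a mu (x - y) s"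
  define k where "k = kern mu s (x - a * s) y"
  have k0: "k > 0" unfolding k_def by (rule kern_pos)
  have dG: "((\<lambda>x'. G0 a mu (x' - y) s) has_real_derivative g' * 1) (at x)"
    unfolding g'_def
    by (rule DERIV_chain2[OF G0_deriv[OF mu s]]) (auto intro!: derivative_eq_intros)
  have "((\<lambda>x'. G0 a mu (x' - y) s * eta a b mu M x' t) has_real_derivative
      (g' * 1) * eta a b mu M x t + d * G0 a mu (x - y) s) (at x)"
    by (rule DERIV_cong[OF DERIV_mult[OF dG d]]) (simp add: algebra_simps)
  then have der: "deriv (\<lambda>x'. G0 a mu (x' - y) s * eta a b mu M x' t) x = g' * eta a b mu M x t + d * G0 a mu (x - y) s"
    by (simp add: DERIV_imp_deriv)
  have el: "etal b mu M > 0" by (rule etal_pos)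
  have e1: "etal b mu M \<le> eta a b mu M x t" "eta a b mu M x t \<le> etau b mu M"
    using eta_bounds[OF mu b t] by auto
  have e2: "etal b mu M \<le> eta a b mu M y tau" using eta_bounds[OF mu b tau] by auto
  have gb: "\<bar>g'\<bar> \<le> 1 / (2 * mu * sqrt pi) * (1 / s) * k"
    unfolding g'_def k_def by (rule G0'_bound[OF mu s])
  have Gb: "\<bar>G0 a mu (x - y) s\<bar> \<le> 1 / sqrt (4 * pi * mu * s) * k"
    unfolding k_def by (rule G0_bound[OF mu s])
  have K10: "K1 b mu M \<ge> 0" unfolding K1_def using EE_pos[of b mu M] mu
    by (intro divide_nonneg_nonneg mult_nonneg_nonneg) auto
  have "\<bar>g' * eta a b mu M x t + d * G0 a mu (x - y) s\<bar> \<le> \<bar>g'\<bar> * eta a b mu M x t + \<bar>d\<bar> * \<bar>G0 a mu (x - y) s\<bar>"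
    using e1 el by (simp add: abs_mult abs_triangle_ineq[THEN order_trans])
  also have "\<dots> \<le> (1 / (2 * mu * sqrt pi) * (1 / s) * k) * etau b mu M
       + (K1 b mu M * (1 / sqrt (1 + t))) * (1 / sqrt (4 * pi * mu * s) * k)"
    using gb Gb dle e1 el k0 s mu K10 t
    by (intro add_mono mult_mono) auto
  also have "\<dots> = (1 / (2 * mu * sqrt pi) * etau b mu M * (1 / s)
        + K1 b mu M / sqrt (4 * pi * mu) * (1 / (sqrt s * sqrt (1 + t)))) * k"
    using s mu t by (simp add: real_sqrt_mult field_simps)
  finally have D1: "\<bar>deriv (\<lambda>x'. G0 a mu (x' - y) s * eta a b mu M x' t) x\<bar>
     \<le> (1 / (2 * mu * sqrt pi) * etau b mu M * (1 / s)
        + K1 b mu M / sqrt (4 * pi * mu) * (1 / (sqrt s * sqrt (1 + t)))) * k"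
    unfolding der .
  have ie: "\<bar>inverse (eta a b mu M y tau)\<bar> \<le> 1 / etal b mu M"
    using e2 el by (simp add: inverse_eq_divide frac_le)
  have "\<bar>deriv (\<lambda>x'. G0 a mu (x' - y) s * eta a b mu M x' t) x * inverse (eta a b mu M y tau) * L\<bar>
     \<le> ((1 / (2 * mu * sqrt pi) * etau b mu M * (1 / s)
        + K1 b mu M / sqrt (4 * pi * mu) * (1 / (sqrt s * sqrt (1 + t)))) * k) * (1 / etal b mu M) * \<bar>L\<bar>"
    unfolding abs_mult using D1 ie by (intro mult_mono mult_right_mono) auto
  also have "\<dots> = (1 / (2 * mu * sqrt pi) * etau b mu M / etal b mu M * (1 / s)
        + K1 b mu M / (sqrt (4 * pi * mu) * etal b mu M) * (1 / (sqrt s * sqrt (1 + t))))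
       * k * \<bar>L\<bar>"
    using el by (simp add: field_simps)
  finally show ?thesis unfolding k_def .
qed

lemma final_alg:
  fixes s t P1 P2 C2 N rp :: real
  assumes s: "s > 0" and t: "t > -1" and P: "P1 \<ge> 0" "P2 \<ge> 0" and C2: "C2 \<ge> 0" and N: "N \<ge> 0"
  shows "(P1 * (1 / s) + P2 * (1 / (sqrt s * sqrt (1 + t)))) * (C2 * s powr (rp / 2) * N)
    \<le> C2 * (P1 + P2) * (\<Sum>n\<in>{0::nat, 1}. (1 + t) powr (- 1/2 + real n / 2) * s powr (- 1/2 + rp / 2 - real n / 2)) * N"
proof -
  define X0 where "X0 = (1 + t) powr (- 1 / 2) * s powr (rp / 2 - 1 / 2)"
  define X1 where "X1 = s powr (rp / 2 - 1)"
  have t1: "1 + t > 0" using t by simp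
  have sum: "(\<Sum>n\<in>{0::nat, 1}. (1 + t) powr (- 1/2 + real n / 2) * s powr (- 1/2 + rp / 2 - real n / 2)) = X0 + X1"
  proof -
    have e: "(1 + t) powr (- 1 / 2 + 1 / 2) = 1" using t1 by simp
    have e2: "rp / 2 - 1 / 2 - 1 / 2 = rp / 2 - 1" by simp
    show ?thesis unfolding X0_def X1_def using e e2 by simp
  qed
  have x1: "1 / s * s powr (rp / 2) = X1" unfolding X1_def using s by (simp add: powr_diff)
  have x0: "1 / (sqrt s * sqrt (1 + t)) * s powr (rp / 2) = X0"
  proof -
    have "s powr (rp / 2 - 1 / 2) = s powr (rp / 2) / sqrt s" using s by (simp add: powr_diff powr_half_sqrt)
    moreover have "(1 + t) powr (- 1 / 2) = 1 / sqrt (1 + t)" using t1 by (rule powr_mhalf)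
    ultimately show ?thesis unfolding X0_def by simp
  qed
  have X0p: "X0 \<ge> 0" and X1p: "X1 \<ge> 0" unfolding X0_def X1_def by auto
  have "(P1 * (1 / s) + P2 * (1 / (sqrt s * sqrt (1 + t)))) * (C2 * s powr (rp / 2) * N)
      = C2 * N * (P1 * (1 / s * s powr (rp / 2)) + P2 * (1 / (sqrt s * sqrt (1 + t)) * s powr (rp / 2)))"
    by (simp add: algebra_simps)
  also have "\<dots> = C2 * N * (P1 * X1 + P2 * X0)" unfolding x0 x1 ..
  also have "\<dots> \<le> C2 * N * ((P1 + P2) * (X0 + X1))"
  proof -
    have "P1 * X1 + P2 * X0 \<le> (P1 + P2) * (X0 + X1)"
      using P X0p X1p by (simp add: algebra_simps add_increasing)
    then show ?thesis using C2 N by (intro mult_left_mono) auto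
  qed
  also have "\<dots> = C2 * (P1 + P2) * (X0 + X1) * N" by (simp add: algebra_simps)
  finally show ?thesis unfolding sum .
qed

theorem lemma2p7:
  fixes a b mu M :: real and p q :: ereal
  assumes "\<bar>a\<bar> < 1" and "b \<noteq> 0" and "mu = 1 - a\<^sup>2" and "\<bar>M\<bar> \<le> 1"
    and "1 \<le> p" and "1 \<le> q" and "1 / p + 1 / q = 1"
  shows "\<exists>C. \<forall>(lam :: real \<Rightarrow> real \<Rightarrow> real) t \<tau>.
     0 \<le> \<tau> \<and> \<tau> < t
     \<and> (\<forall>x. (\<lambda>\<xi>. lam \<xi> \<tau>) differentiable (at x))
     \<and> continuous_on UNIV (deriv (\<lambda>\<xi>. lam \<xi> \<tau>))
     \<and> ((\<lambda>\<xi>. lam \<xi> \<tau>) \<longlongrightarrow> 0) at_top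
     \<and> ((\<lambda>\<xi>. lam \<xi> \<tau>) \<longlongrightarrow> 0) at_bot
     \<and> memLq q (\<lambda>\<xi>. lam \<xi> \<tau>)
     \<longrightarrow> (\<forall>x. \<bar>U_op a b mu M (deriv (\<lambda>\<xi>. lam \<xi> \<tau>)) x t \<tau>\<bar>
           \<le> C * (\<Sum>n\<in>{0::nat, 1}.
                 (1 + t) powr (- 1/2 + real n / 2)
                 * (t - \<tau>) powr (- 1/2 + real_of_ereal (1 / p) / 2 - real n / 2))
               * Lq_norm q (\<lambda>\<xi>. lam \<xi> \<tau>))"
proof -
  have mu: "mu > 0"
  proof -
    have "a\<^sup>2 < 1" using assms(1) by (simp add: abs_square_less_1)
    then show ?thesis using assms(3) by simp
  qed
  note b = assms(2)
  define P1 where "P1 = 1 / (2 * mu * sqrt pi) * etau b mu M / etal b mu M"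
  define P2 where "P2 = K1 b mu M / (sqrt (4 * pi * mu) * etal b mu M)"
  define C2 where "C2 = 1 + 8 * pi * mu"
  have el: "etal b mu M > 0" by (rule etal_pos)
  have eu: "etau b mu M > 0" unfolding etau_def using EE_pos[of b mu M] Dl_pos[of b mu M] by simp
  have K10: "K1 b mu M \<ge> 0" unfolding K1_def using EE_pos[of b mu M] mu
    by (intro divide_nonneg_nonneg mult_nonneg_nonneg) auto
  have P1: "P1 \<ge> 0" unfolding P1_def using el eu mu by simp
  have P2: "P2 \<ge> 0" unfolding P2_def using el K10 mu by simp
  have C2: "C2 \<ge> 0" unfolding C2_def using mu by simp
  show ?thesis
  proof (intro exI[of _ "C2 * (P1 + P2)"] allI impI)
    fix lam :: "real \<Rightarrow> real \<Rightarrow> real" and t \<tau> x :: real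
    assume H: "0 \<le> \<tau> \<and> \<tau> < t
     \<and> (\<forall>x. (\<lambda>\<xi>. lam \<xi> \<tau>) differentiable (at x))
     \<and> continuous_on UNIV (deriv (\<lambda>\<xi>. lam \<xi> \<tau>))
     \<and> ((\<lambda>\<xi>. lam \<xi> \<tau>) \<longlongrightarrow> 0) at_top
     \<and> ((\<lambda>\<xi>. lam \<xi> \<tau>) \<longlongrightarrow> 0) at_bot
     \<and> memLq q (\<lambda>\<xi>. lam \<xi> \<tau>)"
    define l where "l = (\<lambda>\<xi>. lam \<xi> \<tau>)"
    define s where "s = t - \<tau>"
    have tau0: "0 \<le> \<tau>" and tt: "\<tau> < t" using H by auto
    have diff: "\<And>w. l differentiable (at w)" using H unfolding l_def by auto
    have lim: "(l \<longlongrightarrow> 0) at_bot" using H unfolding l_def by auto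
    have mem: "memLq q l" using H unfolding l_def by auto
    have s0: "s > 0" unfolding s_def using tt by simp
    have t1: "t > -1" using tau0 tt by simp
    have tau1: "\<tau> > -1" using tau0 by simp
    have lder: "(l has_real_derivative deriv l w) (at w)" for w
      using diff[of w] by (simp add: DERIV_deriv_iff_real_differentiable)
    have intl: "integral {..y} (deriv l) = l y" for y
      using improper_ftc[of y l "deriv l" 0, OF lder lim] by (simp add: integral_unique)
    obtain d where d: "((\<lambda>x'. eta a b mu M x' t) has_real_derivative d) (at x)"
      and dle: "\<bar>d\<bar> \<le> K1 b mu M * (1 / sqrt (1 + t))"
      using eta_deriv[OF mu b t1, where a=a and M=M and x=x] by blast
    define A where "A = P1 * (1 / s) + P2 * (1 / (sqrt s * sqrt (1 + t)))"
    have A0: "A \<ge> 0" unfolding A_def using P1 P2 s0 t1 by simp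
    define F where "F y = deriv (\<lambda>x'. G0 a mu (x' - y) (t - \<tau>) * eta a b mu M x' t) x
            * inverse (eta a b mu M y \<tau>) * integral {..y} (deriv l)" for y
    define k where "k y = kern mu s (x - a * s) y * \<bar>l y\<bar>" for y
    have Fb: "\<bar>F y\<bar> \<le> A * k y" for y
    proof -
      have "\<bar>F y\<bar> \<le> (1 / (2 * mu * sqrt pi) * etau b mu M / etal b mu M * (1 / s)
        + K1 b mu M / (sqrt (4 * pi * mu) * etal b mu M) * (1 / (sqrt s * sqrt (1 + t))))
       * kern mu s (x - a * s) y * \<bar>integral {..y} (deriv l)\<bar>"
        unfolding F_def s_def[symmetric] by (rule F_bound[OF mu b s0 t1 tau1 d dle])
      then show ?thesis unfolding intl A_def k_def P1_def P2_def by (simp add: mult.assoc)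
    qed
    have hk: "integrable lborel k \<and> (\<integral>y. k y \<partial>lborel) \<le> C2 * s powr (real_of_ereal (1 / p) / 2) * Lq_norm q l"
      unfolding k_def C2_def by (rule holder_kern[OF mu s0 assms(5,6,7) mem])
    have k0: "k y \<ge> 0" for y unfolding k_def using kern_pos[of mu s "x - a * s" y] by simp
    have "\<bar>U_op a b mu M (deriv l) x t \<tau>\<bar> = \<bar>\<integral>y. F y \<partial>lborel\<bar>"
      unfolding U_op_def F_def ..
    also have "\<dots> \<le> (\<integral>y. \<bar>F y\<bar> \<partial>lborel)" by (rule integral_abs_bound)
    also have "\<dots> \<le> (\<integral>y. A * k y \<partial>lborel)"
      by (rule integral_mono') (use hk Fb A0 k0 in auto)
    also have "\<dots> = A * (\<integral>y. k y \<partial>lborel)" by simp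
    also have "\<dots> \<le> A * (C2 * s powr (real_of_ereal (1 / p) / 2) * Lq_norm q l)"
      using hk A0 by (intro mult_left_mono) auto
    also have "\<dots> \<le> C2 * (P1 + P2) * (\<Sum>n\<in>{0::nat, 1}. (1 + t) powr (- 1/2 + real n / 2)
          * s powr (- 1/2 + real_of_ereal (1 / p) / 2 - real n / 2)) * Lq_norm q l"
      unfolding A_def by (rule final_alg[OF s0 t1 P1 P2 C2 Lq_norm_nonneg])
    finally show "\<bar>U_op a b mu M (deriv (\<lambda>\<xi>. lam \<xi> \<tau>)) x t \<tau>\<bar>
           \<le> C2 * (P1 + P2) * (\<Sum>n\<in>{0::nat, 1}.
                 (1 + t) powr (- 1/2 + real n / 2)
                 * (t - \<tau>) powr (- 1/2 + real_of_ereal (1 / p) / 2 - real n / 2))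
               * Lq_norm q (\<lambda>\<xi>. lam \<xi> \<tau>)"
      unfolding l_def s_def .
  qed
qed

end
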